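(* Let $\varphi:Q\to Q_C$ be the homomorphism determined by $\varphi(y_i)=A_i$ for $i=1,\dots,m$. Then for every $w\in Q$, $|\varphi(w)|_{Y_C}=C\,|w|_Y$, where $|\cdot|_{Y_C}$ is the word length in $Q_C$ with respect to $Y_C$ and $|\cdot|_Y$ is the word length in $Q$ with respect to $Y$.
   Context: Let $Q$ be a finitely generated recursively presented group with presentation $\langle Y\mid\mathcal{S}\rangle$, where $Y=\{y_1,\dots,y_m\}$ is finite, $\mathcal{S}$ is a recursive set of positive words over $Y$, and the empty word is not in $\mathcal{S}$. Let $C\ge1$ be an integer. For $i=1,\dots,m$ let $Y_{C,i}=\{a_{1,i},\dots,a_{C,i}\}$, $Y_C=\bigcup_iY_{C,i}$ (all letters distinct), $A_i=a_{1,i}\cdots a_{C,i}\in F(Y_C)$. For $r=r(y_1,\dots,y_m)\in\mathcal{S}$ let $r_C=r(A_1,\dots,A_m)$, $\mathcal{S}_C=\{r_C:r\in\mathcal{S}\}$, and $Q_C=\langle Y_C\mid\mathcal{S}_C\rangle$. (The map $\varphi$ is well defined since it sends each relator $r$ to $r_C$.) *)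

theory Defs
  imports Main
begin

text \<open>Words over a generating alphabet: a letter is (True, x) for x and (False, x) for x inverse.\<close>
type_synonym 'g word = "(bool \<times> 'g) list"

definition inv_word :: "'g word \<Rightarrow> 'g word" where
  "inv_word w = rev (map (\<lambda>(b, x). (\<not> b, x)) w)"

definition pos_word :: "'g list \<Rightarrow> 'g word" where
  "pos_word r = map (\<lambda>x. (True, x)) r"

text \<open>Equality in the group presented by generators and the (positive) relators R:
  the congruence on words generated by free cancellation and relators.\<close>
inductive pres_eq :: "'g list set \<Rightarrow> 'g word \<Rightarrow> 'g word \<Rightarrow> bool" for R where
  refl: "pres_eq R w w"
| sym: "pres_eq R u v \<Longrightarrow> pres_eq R v u"
| trans: "pres_eq R u v \<Longrightarrow> pres_eq R v w \<Longrightarrow> pres_eq R u w"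
| cancel: "pres_eq R (u @ [(b, x), (\<not> b, x)] @ v) (u @ v)"
| rel: "r \<in> R \<Longrightarrow> pres_eq R (u @ pos_word r @ v) (u @ v)"

definition word_length :: "'g set \<Rightarrow> 'g list set \<Rightarrow> 'g word \<Rightarrow> nat" where
  "word_length Y R w = (LEAST n. \<exists>w'. set (map snd w') \<subseteq> Y \<and> length w' = n \<and> pres_eq R w w')"

text \<open>Generators y_i of Q are i < m; generators a_{j,i} of Q_C are (j,i) with j < C, i < m.\<close>
definition Y_C :: "nat \<Rightarrow> nat \<Rightarrow> (nat \<times> nat) set" where
  "Y_C C m = {..<C} \<times> {..<m}"

definition A_C :: "nat \<Rightarrow> nat \<Rightarrow> (nat \<times> nat) list" where
  "A_C C i = map (\<lambda>j. (j, i)) [0..<C]"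

definition rel_C :: "nat \<Rightarrow> nat list \<Rightarrow> (nat \<times> nat) list" where
  "rel_C C r = concat (map (A_C C) r)"

definition S_C :: "nat \<Rightarrow> nat list set \<Rightarrow> (nat \<times> nat) list set" where
  "S_C C S = rel_C C ` S"

definition phi_C :: "nat \<Rightarrow> nat word \<Rightarrow> (nat \<times> nat) word" where
  "phi_C C w = concat (map (\<lambda>(b, i). if b then pos_word (A_C C i)
                                         else inv_word (pos_word (A_C C i))) w)"

end

theory Submission
  imports Defs
begin

definition psi :: "nat \<Rightarrow> (nat \<times> nat) word \<Rightarrow> nat word" where
  "psi j v = map (\<lambda>(b, (k, i)). (b, i)) (filter (\<lambda>(b, (k, i)). k = j) v)"

lemma psi_append[simp]: "psi j (u @ v) = psi j u @ psi j v"
  by (simp add: psi_def)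

lemma psi_Nil[simp]: "psi j [] = []" by (simp add: psi_def)

lemma inv_word_Nil[simp]: "inv_word [] = []" by (simp add: inv_word_def)
lemma inv_word_Cons[simp]: "inv_word ((b,x) # v) = inv_word v @ [(\<not> b, x)]"
  by (simp add: inv_word_def)
lemma inv_word_append[simp]: "inv_word (u @ v) = inv_word v @ inv_word u"
  by (simp add: inv_word_def)
lemma inv_inv[simp]: "inv_word (inv_word v) = v"
  by (induction v) (auto simp: inv_word_def)

lemma psi_inv: "psi j (inv_word v) = inv_word (psi j v)"
  by (induction v) (auto simp: psi_def)

lemma filter_upt_eq: "j < C \<Longrightarrow> filter (\<lambda>k. k = j) [0..<C] = [j]"
proof (induction C)
  case 0 then show ?case by simp
next
  case (Suc C)
  show ?case
  proof (cases "j < C")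
    case True then show ?thesis using Suc by simp
  next
    case False then have "j = C" using Suc by simp
    then show ?thesis by (simp add: filter_empty_conv)
  qed
qed

lemma psi_A: "j < C \<Longrightarrow> psi j (pos_word (A_C C i)) = [(True, i)]"
proof -
  assume j: "j < C"
  have "filter (\<lambda>(b, (k, i)). k = j) (pos_word (A_C C i))
       = map (\<lambda>k. (True, (k, i))) (filter (\<lambda>k. k = j) [0..<C])"
    by (simp add: pos_word_def A_C_def filter_map o_def)
  also have "\<dots> = [(True, (j, i))]" using j by (simp add: filter_upt_eq)
  finally show ?thesis by (simp add: psi_def)
qed

lemma psi_phi: "j < C \<Longrightarrow> psi j (phi_C C w) = w"
  by (induction w) (auto simp: phi_C_def psi_A psi_inv)

lemma psi_rel: "j < C \<Longrightarrow> psi j (pos_word (rel_C C r)) = pos_word r"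
  by (induction r) (auto simp: rel_C_def pos_word_def psi_A[unfolded pos_word_def])

lemma pres_eq_psi:
  assumes "pres_eq (S_C C S) u v" "j < C"
  shows "pres_eq S (psi j u) (psi j v)"
  using assms(1)
proof (induction rule: pres_eq.induct)
  case (refl w) then show ?case by (rule pres_eq.refl)
next
  case (sym a b) then show ?case by (blast intro: pres_eq.sym)
next
  case (trans a b c) then show ?case by (blast intro: pres_eq.trans)
next
  case (cancel u b x v)
  obtain k i where x: "x = (k, i)" by fastforce
  show ?case
  proof (cases "k = j")
    case True
    have "pres_eq S (psi j u @ [(b, i), (\<not> b, i)] @ psi j v) (psi j u @ psi j v)"
      by (rule pres_eq.cancel)
    then show ?thesis using True x by (simp add: psi_def)
  next
    case False
    then show ?thesis using x by (simp add: psi_def pres_eq.refl)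
  qed
next
  case (rel r u v)
  then obtain r0 where r0: "r0 \<in> S" "r = rel_C C r0" by (auto simp: S_C_def)
  have "pres_eq S (psi j u @ pos_word r0 @ psi j v) (psi j u @ psi j v)"
    using r0(1) by (rule pres_eq.rel)
  then show ?case using r0 assms(2) by (simp add: psi_rel)
qed

lemma sum_len_psi:
  assumes "set (map snd v) \<subseteq> Y_C C m"
  shows "(\<Sum>j<C. length (psi j v)) = length v"
  using assms
proof (induction v)
  case Nil then show ?case by simp
next
  case (Cons a v)
  obtain b k i where a: "a = (b, (k, i))" by (metis prod.exhaust)
  have k: "k < C" using Cons.prems a by (auto simp: Y_C_def)
  have "(\<Sum>j<C. length (psi j (a # v))) = (\<Sum>j<C. (if j = k then 1 else 0) + length (psi j v))"
    by (rule sum.cong) (auto simp: a psi_def)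
  also have "\<dots> = 1 + (\<Sum>j<C. length (psi j v))"
    using k by (simp add: sum.distrib)
  finally show ?case using Cons by simp
qed

lemma pres_eq_cong:
  assumes "pres_eq R a b" shows "pres_eq R (u @ a @ v) (u @ b @ v)"
  using assms
proof (induction rule: pres_eq.induct)
  case (refl w) then show ?case by (rule pres_eq.refl)
next
  case (sym a b) then show ?case by (blast intro: pres_eq.sym)
next
  case (trans a b c) then show ?case by (blast intro: pres_eq.trans)
next
  case (cancel u' b x v')
  show ?case using pres_eq.cancel[of R "u @ u'" b x "v' @ v"] by simp
next
  case (rel r u' v')
  show ?case using pres_eq.rel[of r R "u @ u'" "v' @ v"] rel by simp
qed

lemma cancel_word: "pres_eq R (u @ x @ inv_word x @ v) (u @ v)"
proof (induction x arbitrary: v rule: rev_induct)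
  case Nil then show ?case by (simp add: pres_eq.refl)
next
  case (snoc a x)
  obtain b y where a: "a = (b, y)" by fastforce
  have "pres_eq R (u @ x @ [(b, y), (\<not> b, y)] @ inv_word x @ v) (u @ x @ inv_word x @ v)"
    using pres_eq.cancel[of R "u @ x" b y "inv_word x @ v"] by simp
  then have "pres_eq R (u @ (x @ [a]) @ inv_word (x @ [a]) @ v) (u @ x @ inv_word x @ v)"
    by (simp add: a inv_word_def)
  then show ?case using snoc pres_eq.trans by blast
qed

lemma phi_append[simp]: "phi_C C (u @ v) = phi_C C u @ phi_C C v"
  by (simp add: phi_C_def)

lemma phi_pos: "phi_C C (pos_word r) = pos_word (rel_C C r)"
  by (induction r) (auto simp: phi_C_def pos_word_def rel_C_def)

lemma pres_eq_phi:
  assumes "pres_eq S u v"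
  shows "pres_eq (S_C C S) (phi_C C u) (phi_C C v)"
  using assms
proof (induction rule: pres_eq.induct)
  case (refl w) then show ?case by (rule pres_eq.refl)
next
  case (sym a b) then show ?case by (blast intro: pres_eq.sym)
next
  case (trans a b c) then show ?case by (blast intro: pres_eq.trans)
next
  case (cancel u b x v)
  let ?P = "pos_word (A_C C x)"
  show ?case
  proof (cases b)
    case True
    show ?thesis using cancel_word[of "S_C C S" "phi_C C u" ?P "phi_C C v"] True
      by (simp add: phi_C_def)
  next
    case False
    show ?thesis using cancel_word[of "S_C C S" "phi_C C u" "inv_word ?P" "phi_C C v"] False
      by (simp add: phi_C_def)
  qed
next
  case (rel r u v)
  have "rel_C C r \<in> S_C C S" using rel by (simp add: S_C_def)
  then show ?case using pres_eq.rel[of "rel_C C r" "S_C C S" "phi_C C u" "phi_C C v"]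
    by (simp add: phi_pos)
qed

lemma len_phi: "length (phi_C C w) = C * length w"
  by (induction w) (auto simp: phi_C_def pos_word_def A_C_def inv_word_def)

lemma set_phi: "set (map snd w) \<subseteq> {..<m} \<Longrightarrow> set (map snd (phi_C C w)) \<subseteq> Y_C C m"
  by (induction w) (auto simp: phi_C_def pos_word_def A_C_def inv_word_def Y_C_def)

theorem lemma3p4:
  fixes m C :: nat and S :: "nat list set" and w :: "nat word"
  assumes "C \<ge> 1"
    and "\<forall>r\<in>S. set r \<subseteq> {..<m}"
    and "[] \<notin> S"
    and "set (map snd w) \<subseteq> {..<m}"
  shows "word_length (Y_C C m) (S_C C S) (phi_C C w) = C * word_length {..<m} S w"
proof (rule antisym)
  let ?P = "\<lambda>n. \<exists>w'. set (map snd w') \<subseteq> {..<m} \<and> length w' = n \<and> pres_eq S w w'"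
  have "?P (length w)" using assms(4) pres_eq.refl by blast
  then have "?P (Least ?P)" by (rule LeastI)
  then obtain w' where w': "set (map snd w') \<subseteq> {..<m}" "length w' = word_length {..<m} S w"
    "pres_eq S w w'" by (auto simp: word_length_def)
  have "\<exists>v. set (map snd v) \<subseteq> Y_C C m \<and> length v = C * word_length {..<m} S w
        \<and> pres_eq (S_C C S) (phi_C C w) v"
    proof (intro exI conjI)
    show "set (map snd (phi_C C w')) \<subseteq> Y_C C m" by (rule set_phi[OF w'(1)])
    show "length (phi_C C w') = C * word_length {..<m} S w" using w'(2) by (simp add: len_phi)
    show "pres_eq (S_C C S) (phi_C C w) (phi_C C w')" by (rule pres_eq_phi[OF w'(3)])
  qed
  then show "word_length (Y_C C m) (S_C C S) (phi_C C w) \<le> C * word_length {..<m} S w"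
    unfolding word_length_def by (rule Least_le)
next
  let ?P = "\<lambda>n. \<exists>v. set (map snd v) \<subseteq> Y_C C m \<and> length v = n \<and> pres_eq (S_C C S) (phi_C C w) v"
  have "?P (length (phi_C C w))" using set_phi[OF assms(4)] pres_eq.refl by blast
  then have "?P (Least ?P)" by (rule LeastI)
  then obtain v where v: "set (map snd v) \<subseteq> Y_C C m"
    "length v = word_length (Y_C C m) (S_C C S) (phi_C C w)"
    "pres_eq (S_C C S) (phi_C C w) v" by (auto simp: word_length_def)
  have le: "word_length {..<m} S w \<le> length (psi j v)" if j: "j < C" for j
  proof -
    have "pres_eq S (psi j (phi_C C w)) (psi j v)" using pres_eq_psi[OF v(3) j] .
    then have "pres_eq S w (psi j v)" using psi_phi[OF j] by simp
    moreover have "set (map snd (psi j v)) \<subseteq> {..<m}"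
      using v(1) by (auto simp: psi_def Y_C_def)
    ultimately show ?thesis unfolding word_length_def by (intro Least_le) blast
  qed
  have "C * word_length {..<m} S w = (\<Sum>j<C. word_length {..<m} S w)" by simp
  also have "\<dots> \<le> (\<Sum>j<C. length (psi j v))" by (rule sum_mono) (simp add: le)
  also have "\<dots> = length v" using sum_len_psi[OF v(1)] .
  finally show "C * word_length {..<m} S w \<le> word_length (Y_C C m) (S_C C S) (phi_C C w)"
    using v(2) by simp
qed

end
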